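(* For each finite set $\tau\subseteq\mathbb{S}$ and each $s\in\mathbb{S}$ there is an MSO sentence $\phi$ over $\mathbb{R}_{\mathrm{tree}}(\mathbb{B}^\tau_{\mathrm{parse}})$ such that for every tree $T\in\mathcal{T}(\mathbb{B}^\tau_{\mathrm{parse}})$: $\|T\|\models\phi$ iff the graph $\mathbf{val}(T)$ has an $s$-source.
   Context: Graphs over a countably infinite set $\mathbb{S}$ of source labels and finite set $\mathbb{A}$ of edge labels: isomorphism classes of finite $\mathbb{A}$-labelled hypergraphs with an injective map $\xi$ from a finite sort into the vertices ($\xi(s)$ is the $s$-source). HR operations: $\mathbf{0}_\sigma$ (one $s$-source for each $s\in\sigma$), $\mathbf{a}_{(s_1,\ldots,s_{\#a})}$ (one $a$-edge on $s_i$-sources), $\mathsf{restrict}_\sigma$ (forget source labels outside $\sigma$; sort $\sigma'\mapsto\sigma\cap\sigma'$), $\mathsf{rename}_\alpha$ ($\alpha$ finite permutation of $\mathbb{S}$; source map $\xi\circ\alpha$), $\parallel$ (disjoint union fusing equally-labelled sources). Trees: with root label $\mathfrak{r}$, trees over an alphabet $\mathbb{B}$ of unary/binary labels are values of ground terms over $\mathbf{c}$ (root with unary $c$-edge), $\mathsf{append}_b$ (new root with a $b$-edge to the old root), $\parallel$ (fuse roots); $\mathcal{T}(\mathbb{B})$ is their set; a tree $T$ is encoded by $\|T\|$ with universe nodes $\cup$ edges over $\mathbb{R}_{\mathrm{tree}}(\mathbb{B})=\{r_b\}_{b\in\mathbb{B}}\cup\{r_\mathfrak{r}\}$ ($r_b(e,\bar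 n)$: $e$ is a $b$-edge on $\bar n$; $r_\mathfrak{r}$: the root). $\mathbb{B}^\tau_{\mathrm{parse}}$: unary labels $\underline{\mathbf{0}}_{\sigma}$ ($\sigma\subseteq\tau$), $\underline{\mathbf{a}}_{(s_1..)}$ ($s_i\in\tau$), binary labels $\underline{\mathsf{restrict}}_{\sigma}$ ($\sigma\subseteq\tau$), $\underline{\mathsf{rename}}_\alpha$ ($\alpha$ fixing everything outside $\tau$). $\mathbf{val}(T)$ is the value of the HR term obtained from a tree term for $T$ by replacing $\underline{\mathbf{c}}$ by $\mathbf{c}$ and $\mathsf{append}_{\underline b}$ by the HR operation $b$. *)

theory Defs
  imports Main
begin

section \<open>Graphs with sources (concrete representatives of isomorphism classes)\<close>

text \<open>Source labels: the countably infinite set nat.  Edge labels: a finite type 'a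
  with an arity function ar.  Vertices and edges are represented by natural numbers;
  gsrc is the (partial, injective) source map; its domain is the sort.\<close>

record 'a hgraph =
  gV   :: "nat set"
  gE   :: "nat set"
  glab :: "nat \<Rightarrow> 'a"
  gatt :: "nat \<Rightarrow> nat list"
  gsrc :: "nat \<Rightarrow> nat option"

definition has_source :: "'a hgraph \<Rightarrow> nat \<Rightarrow> bool" where
  "has_source G s \<longleftrightarrow> gsrc G s \<noteq> None"

definition hr_zero :: "nat set \<Rightarrow> 'a hgraph" where
  "hr_zero \<sigma> = \<lparr>gV = \<sigma>, gE = {}, glab = (\<lambda>_. undefined), gatt = (\<lambda>_. []),
     gsrc = (\<lambda>s. if s \<in> \<sigma> then Some s else None)\<rparr>"

definition hr_edge :: "'a \<Rightarrow> nat list \<Rightarrow> 'a hgraph" where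
  "hr_edge a ss = \<lparr>gV = set ss, gE = {0}, glab = (\<lambda>_. a), gatt = (\<lambda>_. ss),
     gsrc = (\<lambda>s. if s \<in> set ss then Some s else None)\<rparr>"

definition hr_restrict :: "nat set \<Rightarrow> 'a hgraph \<Rightarrow> 'a hgraph" where
  "hr_restrict \<sigma> G = G\<lparr>gsrc := (\<lambda>s. if s \<in> \<sigma> then gsrc G s else None)\<rparr>"

definition hr_rename :: "(nat \<Rightarrow> nat) \<Rightarrow> 'a hgraph \<Rightarrow> 'a hgraph" where
  "hr_rename \<alpha> G = G\<lparr>gsrc := gsrc G \<circ> \<alpha>\<rparr>"

text \<open>Parallel composition: vertices of G become 2v, vertices of H become 2v+1,
  except that an s-source of H is fused with the s-source of G when G has one.\<close>

definition par_vmap :: "'a hgraph \<Rightarrow> 'a hgraph \<Rightarrow> nat \<Rightarrow> nat" where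
  "par_vmap G H v =
     (if \<exists>t. gsrc H t = Some v \<and> gsrc G t \<noteq> None
      then 2 * the (gsrc G (SOME t. gsrc H t = Some v \<and> gsrc G t \<noteq> None))
      else 2 * v + 1)"

definition hr_par :: "'a hgraph \<Rightarrow> 'a hgraph \<Rightarrow> 'a hgraph" where
  "hr_par G H =
    \<lparr>gV = (\<lambda>v. 2 * v) ` gV G \<union> par_vmap G H ` gV H,
     gE = (\<lambda>e. 2 * e) ` gE G \<union> (\<lambda>e. 2 * e + 1) ` gE H,
     glab = (\<lambda>e. if even e then glab G (e div 2) else glab H (e div 2)),
     gatt = (\<lambda>e. if even e then map (\<lambda>v. 2 * v) (gatt G (e div 2))
                 else map (par_vmap G H) (gatt H (e div 2))),
     gsrc = (\<lambda>s. case gsrc G s of Some v \<Rightarrow> Some (2 * v)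
                 | None \<Rightarrow> map_option (par_vmap G H) (gsrc H s))\<rparr>"

datatype 'a plabel =
    PZero "nat set"
  | PEdge 'a "nat list"
  | PRestrict "nat set"
  | PRename "nat \<Rightarrow> nat"

definition finite_perm :: "(nat \<Rightarrow> nat) \<Rightarrow> bool" where
  "finite_perm \<alpha> \<longleftrightarrow> bij \<alpha> \<and> finite {x. \<alpha> x \<noteq> x}"

fun parse_unary :: "('a \<Rightarrow> nat) \<Rightarrow> nat set \<Rightarrow> 'a plabel \<Rightarrow> bool" where
  "parse_unary ar \<tau> (PZero \<sigma>) = (\<sigma> \<subseteq> \<tau>)"
| "parse_unary ar \<tau> (PEdge a ss) = (length ss = ar a \<and> distinct ss \<and> set ss \<subseteq> \<tau>)"
| "parse_unary ar \<tau> _ = False"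

fun parse_binary :: "nat set \<Rightarrow> 'a plabel \<Rightarrow> bool" where
  "parse_binary \<tau> (PRestrict \<sigma>) = (\<sigma> \<subseteq> \<tau>)"
| "parse_binary \<tau> (PRename \<alpha>) = (finite_perm \<alpha> \<and> (\<forall>x. x \<notin> \<tau> \<longrightarrow> \<alpha> x = x))"
| "parse_binary \<tau> _ = False"

text \<open>Tree terms: c (root with unary c-edge), append_b, parallel (fuse roots).\<close>

datatype 'b tterm = TC 'b | TApp 'b "'b tterm" | TPar "'b tterm" "'b tterm"

fun wf_tterm :: "('b \<Rightarrow> bool) \<Rightarrow> ('b \<Rightarrow> bool) \<Rightarrow> 'b tterm \<Rightarrow> bool" where
  "wf_tterm U B (TC c) = U c"
| "wf_tterm U B (TApp b t) = (B b \<and> wf_tterm U B t)"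
| "wf_tterm U B (TPar t1 t2) = (wf_tterm U B t1 \<and> wf_tterm U B t2)"

definition parse_tterm :: "('a \<Rightarrow> nat) \<Rightarrow> nat set \<Rightarrow> 'a plabel tterm \<Rightarrow> bool" where
  "parse_tterm ar \<tau> t = wf_tterm (parse_unary ar \<tau>) (parse_binary \<tau>) t"

fun hr_const :: "'a plabel \<Rightarrow> 'a hgraph" where
  "hr_const (PZero \<sigma>) = hr_zero \<sigma>"
| "hr_const (PEdge a ss) = hr_edge a ss"
| "hr_const _ = undefined"

fun hr_unop :: "'a plabel \<Rightarrow> 'a hgraph \<Rightarrow> 'a hgraph" where
  "hr_unop (PRestrict \<sigma>) G = hr_restrict \<sigma> G"
| "hr_unop (PRename \<alpha>) G = hr_rename \<alpha> G"
| "hr_unop _ G = undefined"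

fun val :: "'a plabel tterm \<Rightarrow> 'a hgraph" where
  "val (TC c) = hr_const c"
| "val (TApp b t) = hr_unop b (val t)"
| "val (TPar t1 t2) = hr_par (val t1) (val t2)"

text \<open>Elements: the root node, the node created by append at position p, the edge
  created at position p (by c or by append).\<close>

datatype telem = Root | Nd "nat list" | Ed "nat list"

datatype 'b rsym = RLab 'b | RRoot

fun tuniv :: "'b tterm \<Rightarrow> nat list \<Rightarrow> telem \<Rightarrow> telem set" where
  "tuniv (TC c) p r = {Ed p, r}"
| "tuniv (TApp b t) p r = {Ed p, r} \<union> tuniv t (p @ [2]) (Nd p)"
| "tuniv (TPar t1 t2) p r = tuniv t1 (p @ [0]) r \<union> tuniv t2 (p @ [1]) r"

text \<open>r_b(e, n) for a unary b-edge e on node n; r_b(e, new root, old root) for a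
  binary b-edge created by append_b.\<close>

fun tfacts :: "'b tterm \<Rightarrow> nat list \<Rightarrow> telem \<Rightarrow> ('b rsym \<times> telem list) set" where
  "tfacts (TC c) p r = {(RLab c, [Ed p, r])}"
| "tfacts (TApp b t) p r = {(RLab b, [Ed p, r, Nd p])} \<union> tfacts t (p @ [2]) (Nd p)"
| "tfacts (TPar t1 t2) p r = tfacts t1 (p @ [0]) r \<union> tfacts t2 (p @ [1]) r"

definition enc_univ :: "'b tterm \<Rightarrow> telem set" where
  "enc_univ t = tuniv t [] Root"

definition enc_rel :: "'b tterm \<Rightarrow> ('b rsym \<times> telem list) set" where
  "enc_rel t = insert (RRoot, [Root]) (tfacts t [] Root)"

fun rtree_parse_ar :: "('a \<Rightarrow> nat) \<Rightarrow> nat set \<Rightarrow> 'a plabel rsym \<Rightarrow> nat option" where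
  "rtree_parse_ar ar \<tau> RRoot = Some 1"
| "rtree_parse_ar ar \<tau> (RLab b) =
     (if parse_unary ar \<tau> b then Some 2 else if parse_binary \<tau> b then Some 3 else None)"

datatype 'r mso =
    Atom 'r "nat list"
  | FEq nat nat
  | FMem nat nat
  | FNeg "'r mso"
  | FConj "'r mso" "'r mso"
  | FEx nat "'r mso"
  | SEx nat "'r mso"

fun msat :: "'e set \<Rightarrow> ('r \<times> 'e list) set \<Rightarrow> (nat \<Rightarrow> 'e) \<Rightarrow> (nat \<Rightarrow> 'e set) \<Rightarrow> 'r mso \<Rightarrow> bool" where
  "msat U I f X (Atom r xs) = ((r, map f xs) \<in> I)"
| "msat U I f X (FEq x y) = (f x = f y)"
| "msat U I f X (FMem x Y) = (f x \<in> X Y)"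
| "msat U I f X (FNeg \<phi>) = (\<not> msat U I f X \<phi>)"
| "msat U I f X (FConj \<phi> \<psi>) = (msat U I f X \<phi> \<and> msat U I f X \<psi>)"
| "msat U I f X (FEx x \<phi>) = (\<exists>u\<in>U. msat U I (f(x := u)) X \<phi>)"
| "msat U I f X (SEx Y \<phi>) = (\<exists>A. A \<subseteq> U \<and> msat U I f (X(Y := A)) \<phi>)"

fun ffv :: "'r mso \<Rightarrow> nat set" where
  "ffv (Atom r xs) = set xs"
| "ffv (FEq x y) = {x, y}"
| "ffv (FMem x Y) = {x}"
| "ffv (FNeg \<phi>) = ffv \<phi>"
| "ffv (FConj \<phi> \<psi>) = ffv \<phi> \<union> ffv \<psi>"
| "ffv (FEx x \<phi>) = ffv \<phi> - {x}"
| "ffv (SEx Y \<phi>) = ffv \<phi>"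

fun sfv :: "'r mso \<Rightarrow> nat set" where
  "sfv (Atom r xs) = {}"
| "sfv (FEq x y) = {}"
| "sfv (FMem x Y) = {Y}"
| "sfv (FNeg \<phi>) = sfv \<phi>"
| "sfv (FConj \<phi> \<psi>) = sfv \<phi> \<union> sfv \<psi>"
| "sfv (FEx x \<phi>) = sfv \<phi>"
| "sfv (SEx Y \<phi>) = sfv \<phi> - {Y}"

definition mso_sentence :: "'r mso \<Rightarrow> bool" where
  "mso_sentence \<phi> \<longleftrightarrow> ffv \<phi> = {} \<and> sfv \<phi> = {}"

fun mso_over :: "('r \<Rightarrow> nat option) \<Rightarrow> 'r mso \<Rightarrow> bool" where
  "mso_over \<Sigma> (Atom r xs) = (\<Sigma> r = Some (length xs))"
| "mso_over \<Sigma> (FEq x y) = True"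
| "mso_over \<Sigma> (FMem x Y) = True"
| "mso_over \<Sigma> (FNeg \<phi>) = mso_over \<Sigma> \<phi>"
| "mso_over \<Sigma> (FConj \<phi> \<psi>) = (mso_over \<Sigma> \<phi> \<and> mso_over \<Sigma> \<psi>)"
| "mso_over \<Sigma> (FEx x \<phi>) = mso_over \<Sigma> \<phi>"
| "mso_over \<Sigma> (SEx Y \<phi>) = mso_over \<Sigma> \<phi>"

text \<open>Satisfaction of a sentence (assignments are irrelevant for sentences).\<close>
definition mmodels :: "'e set \<Rightarrow> ('r \<times> 'e list) set \<Rightarrow> 'r mso \<Rightarrow> bool" where
  "mmodels U I \<phi> = msat U I (\<lambda>_. undefined) (\<lambda>_. {}) \<phi>"

end

theory Submission imports Defs "HOL-Library.FuncSet" begin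

lemma hs_par: "has_source (hr_par G H) q \<longleftrightarrow> has_source G q \<or> has_source H q"
  by (auto simp: has_source_def hr_par_def split: option.splits)

lemma hs_restrict: "has_source (hr_restrict \<sigma> G) q \<longleftrightarrow> q \<in> \<sigma> \<and> has_source G q"
  by (auto simp: has_source_def hr_restrict_def)

lemma hs_rename: "has_source (hr_rename \<alpha> G) q \<longleftrightarrow> has_source G (\<alpha> q)"
  by (auto simp: has_source_def hr_rename_def)

lemma hs_zero: "has_source (hr_zero \<sigma>) q \<longleftrightarrow> q \<in> \<sigma>"
  by (auto simp: has_source_def hr_zero_def)

lemma hs_edge: "has_source (hr_edge a ss) q \<longleftrightarrow> q \<in> set ss"
  by (auto simp: has_source_def hr_edge_def)

lemma hs_tau: "wf_tterm (parse_unary ar \<tau>) (parse_binary \<tau>) t \<Longrightarrow> has_source (val t) q \<Longrightarrow> q \<in> \<tau>"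
proof (induction t arbitrary: q)
  case (TC c) then show ?case by (cases c) (auto simp: hs_zero hs_edge)
next
  case (TApp b t) then show ?case
    by (cases b) (auto simp: hs_restrict hs_rename)
next
  case (TPar t1 t2) then show ?case by (auto simp: hs_par)
qed

lemma hs_step: "parse_binary \<tau> b \<Longrightarrow> has_source (hr_unop b G) q \<Longrightarrow>
   \<exists>q'. has_source G q' \<and> (\<forall>G'. has_source G' q' \<longrightarrow> has_source (hr_unop b G') q)"
  by (cases b) (auto simp: hs_restrict hs_rename)

definition NdAbove :: "nat list \<Rightarrow> telem set" where
  "NdAbove p = {Nd (p @ z) | z. True}"

fun HSt :: "'a plabel tterm \<Rightarrow> nat list \<Rightarrow> telem \<Rightarrow> telem \<Rightarrow> nat \<Rightarrow> bool" where
  "HSt (TC c) p r n q = (n = r \<and> has_source (val (TC c)) q)"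
| "HSt (TApp b t) p r n q = ((n = r \<and> has_source (val (TApp b t)) q) \<or> HSt t (p @ [2]) (Nd p) n q)"
| "HSt (TPar t1 t2) p r n q = (HSt t1 (p @ [0]) r n q \<or> HSt t2 (p @ [1]) r n q)"

lemma NdAbove_sub: "NdAbove (p @ [i]) \<subseteq> NdAbove p"
  by (auto simp: NdAbove_def)

lemma NdAbove_self: "Nd p \<in> NdAbove p"
  by (auto simp: NdAbove_def intro: exI[of _ "[]"])

lemma NdAbove_notself: "Nd p \<notin> NdAbove (p @ [i])"
  by (auto simp: NdAbove_def)

lemma NdAbove_disj: "i \<noteq> j \<Longrightarrow> NdAbove (p @ [i]) \<inter> NdAbove (p @ [j]) = {}"
  by (auto simp: NdAbove_def)

lemma Root_notin: "Root \<notin> NdAbove p"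
  by (auto simp: NdAbove_def)

lemma HSt_loc: "HSt t p r n q \<Longrightarrow> n = r \<or> n \<in> NdAbove p"
proof (induction t arbitrary: p r)
  case (TC c) then show ?case by simp
next
  case (TApp b t) then show ?case using NdAbove_self NdAbove_sub by fastforce
next
  case (TPar t1 t2) then show ?case using NdAbove_sub by fastforce
qed

lemma HSt_root: "r \<notin> NdAbove p \<Longrightarrow> HSt t p r r q \<longleftrightarrow> has_source (val t) q"
proof (induction t arbitrary: p r)
  case (TC c) then show ?case by simp
next
  case (TApp b t)
  have "\<not> HSt t (p @ [2]) (Nd p) r q"
    using HSt_loc[of t "p @ [2]" "Nd p" r q] TApp.prems NdAbove_self NdAbove_sub by blast
  then show ?case by simp
next
  case (TPar t1 t2)
  have "r \<notin> NdAbove (p @ [0])" "r \<notin> NdAbove (p @ [1])" using TPar.prems NdAbove_sub by blast+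
  then show ?case using TPar.IH by (simp add: hs_par)
qed

lemma HSt_univ: "HSt t p r n q \<Longrightarrow> n \<in> tuniv t p r"
  by (induction t arbitrary: p r) auto

lemma r_univ: "r \<in> tuniv t p r"
  by (induction t arbitrary: p r) auto

lemma facts_univ: "(l, xs) \<in> tfacts t p r \<Longrightarrow> set xs \<subseteq> tuniv t p r"
  by (induction t arbitrary: p r) (fastforce simp: r_univ)+

lemma facts_RLab: "(RRoot, xs) \<notin> tfacts t p r"
  by (induction t arbitrary: p r) auto


lemma lemB:
  assumes "r \<notin> NdAbove p"
    and "\<And>n q. HSt t p r n q \<Longrightarrow> H n q"
    and "\<And>n q. H n q \<Longrightarrow> n \<noteq> r \<Longrightarrow> n \<in> NdAbove p \<Longrightarrow> HSt t p r n q"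
  shows "(\<forall>c q e n. (RLab c, [e, n]) \<in> tfacts t p r \<longrightarrow> has_source (hr_const c) q \<longrightarrow> H n q) \<and>
         (\<forall>b q q' e n m. (RLab b, [e, n, m]) \<in> tfacts t p r \<longrightarrow>
             (\<forall>G. has_source G q' \<longrightarrow> has_source (hr_unop b G) q) \<longrightarrow> H m q' \<longrightarrow> H n q)"
  using assms
proof (induction t arbitrary: p r)
  case (TC c)
  then show ?case by auto
next
  case (TApp b t)
  have top: "H r q" if "H (Nd p) q'" "\<forall>G. has_source G q' \<longrightarrow> has_source (hr_unop b G) q" for q q'
  proof -
    have "Nd p \<noteq> r" using TApp.prems(1) NdAbove_self by metis
    then have "HSt (TApp b t) p r (Nd p) q'" using TApp.prems(3) that(1) NdAbove_self by blast
    then have "HSt t (p @ [2]) (Nd p) (Nd p) q'" using \<open>Nd p \<noteq> r\<close> by simp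
    then have "has_source (val t) q'" using HSt_root NdAbove_notself by metis
    then have "has_source (val (TApp b t)) q" using that(2) by simp
    then show ?thesis using TApp.prems(2) by simp
  qed
  have ih: "(\<forall>c q e n. (RLab c, [e, n]) \<in> tfacts t (p @ [2]) (Nd p) \<longrightarrow> has_source (hr_const c) q \<longrightarrow> H n q) \<and>
         (\<forall>b q q' e n m. (RLab b, [e, n, m]) \<in> tfacts t (p @ [2]) (Nd p) \<longrightarrow>
             (\<forall>G. has_source G q' \<longrightarrow> has_source (hr_unop b G) q) \<longrightarrow> H m q' \<longrightarrow> H n q)"
  proof (rule TApp.IH)
    show "Nd p \<notin> NdAbove (p @ [2])" by (rule NdAbove_notself)
    show "H n q" if "HSt t (p @ [2]) (Nd p) n q" for n q using TApp.prems(2) that by simp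
    show "HSt t (p @ [2]) (Nd p) n q" if "H n q" "n \<noteq> Nd p" "n \<in> NdAbove (p @ [2])" for n q
    proof -
      have "n \<noteq> r" using that(3) NdAbove_sub TApp.prems(1) by blast
      moreover have "n \<in> NdAbove p" using that(3) NdAbove_sub by blast
      ultimately have "HSt (TApp b t) p r n q" using TApp.prems(3) that(1) by blast
      then show ?thesis using \<open>n \<noteq> r\<close> by simp
    qed
  qed
  show ?case using top ih by auto
next
  case (TPar t1 t2)
  have ih1: "(\<forall>c q e n. (RLab c, [e, n]) \<in> tfacts t1 (p @ [0]) r \<longrightarrow> has_source (hr_const c) q \<longrightarrow> H n q) \<and>
         (\<forall>b q q' e n m. (RLab b, [e, n, m]) \<in> tfacts t1 (p @ [0]) r \<longrightarrow>
             (\<forall>G. has_source G q' \<longrightarrow> has_source (hr_unop b G) q) \<longrightarrow> H m q' \<longrightarrow> H n q)"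
  proof (rule TPar.IH(1))
    show "r \<notin> NdAbove (p @ [0])" using TPar.prems(1) NdAbove_sub by blast
    show "H n q" if "HSt t1 (p @ [0]) r n q" for n q using TPar.prems(2) that by simp
    show "HSt t1 (p @ [0]) r n q" if "H n q" "n \<noteq> r" "n \<in> NdAbove (p @ [0])" for n q
    proof -
      have "HSt (TPar t1 t2) p r n q" using TPar.prems(3) that NdAbove_sub by blast
      moreover have "\<not> HSt t2 (p @ [1]) r n q"
        using HSt_loc[of t2 "p @ [1]" r n q] that(2,3) NdAbove_disj[of 0 1 p] by auto
      ultimately show ?thesis by simp
    qed
  qed
  have ih2: "(\<forall>c q e n. (RLab c, [e, n]) \<in> tfacts t2 (p @ [1]) r \<longrightarrow> has_source (hr_const c) q \<longrightarrow> H n q) \<and>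
         (\<forall>b q q' e n m. (RLab b, [e, n, m]) \<in> tfacts t2 (p @ [1]) r \<longrightarrow>
             (\<forall>G. has_source G q' \<longrightarrow> has_source (hr_unop b G) q) \<longrightarrow> H m q' \<longrightarrow> H n q)"
  proof (rule TPar.IH(2))
    show "r \<notin> NdAbove (p @ [1])" using TPar.prems(1) NdAbove_sub by blast
    show "H n q" if "HSt t2 (p @ [1]) r n q" for n q using TPar.prems(2) that by simp
    show "HSt t2 (p @ [1]) r n q" if "H n q" "n \<noteq> r" "n \<in> NdAbove (p @ [1])" for n q
    proof -
      have "HSt (TPar t1 t2) p r n q" using TPar.prems(3) that NdAbove_sub by blast
      moreover have "\<not> HSt t1 (p @ [0]) r n q"
        using HSt_loc[of t1 "p @ [0]" r n q] that(2,3) NdAbove_disj[of 0 1 p] by auto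
      ultimately show ?thesis by simp
    qed
  qed
  show ?case using ih1 ih2 by auto
qed

lemma lemA:
  assumes "wf_tterm (parse_unary ar \<tau>) (parse_binary \<tau>) t"
    and "tfacts t p r \<subseteq> F"
    and U: "\<And>c q e n. (RLab c, [e, n]) \<in> F \<Longrightarrow> parse_unary ar \<tau> c \<Longrightarrow> q \<in> \<tau> \<Longrightarrow>
              has_source (hr_const c) q \<Longrightarrow> n \<in> Y q"
    and B: "\<And>b q q' e n m. (RLab b, [e, n, m]) \<in> F \<Longrightarrow> parse_binary \<tau> b \<Longrightarrow> q \<in> \<tau> \<Longrightarrow> q' \<in> \<tau> \<Longrightarrow>
              (\<forall>G. has_source G q' \<longrightarrow> has_source (hr_unop b G) q) \<Longrightarrow> m \<in> Y q' \<Longrightarrow> n \<in> Y q"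
    and "has_source (val t) q"
  shows "r \<in> Y q"
  using assms(1,2,5)
proof (induction t arbitrary: p r q)
  case (TC c)
  then show ?case using U hs_tau[OF TC.prems(1,3)] by auto
next
  case (TApp b t)
  have pb: "parse_binary \<tau> b" and wt: "wf_tterm (parse_unary ar \<tau>) (parse_binary \<tau>) t"
    using TApp.prems by auto
  have q: "q \<in> \<tau>" using hs_tau[OF TApp.prems(1,3)] .
  obtain q' where q': "has_source (val t) q'" "\<forall>G. has_source G q' \<longrightarrow> has_source (hr_unop b G) q"
    using hs_step[OF pb, of "val t" q] TApp.prems(3) by auto
  have "q' \<in> \<tau>" using hs_tau[OF wt q'(1)] .
  have "Nd p \<in> Y q'" using TApp.IH[OF wt _ q'(1), of "p @ [2]" "Nd p"] TApp.prems(2) by auto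
  moreover have "(RLab b, [Ed p, r, Nd p]) \<in> F" using TApp.prems(2) by auto
  ultimately show ?case using B pb q \<open>q' \<in> \<tau>\<close> q'(2) by blast
next
  case (TPar t1 t2)
  then show ?case by (auto simp: hs_par)
qed


lemma fin_Lu:
  assumes "finite \<tau>" shows "finite {c :: 'a::finite plabel. parse_unary ar \<tau> c}"
proof -
  have "{c :: 'a plabel. parse_unary ar \<tau> c} \<subseteq>
     PZero ` Pow \<tau> \<union> (\<lambda>(a, ss). PEdge a ss) ` (UNIV \<times> {ss. set ss \<subseteq> \<tau> \<and> distinct ss})"
  proof
    fix c :: "'a plabel" assume "c \<in> {c. parse_unary ar \<tau> c}"
    then show "c \<in> PZero ` Pow \<tau> \<union> (\<lambda>(a, ss). PEdge a ss) ` (UNIV \<times> {ss. set ss \<subseteq> \<tau> \<and> distinct ss})"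
    proof (cases c)
      case (PZero x1) then show ?thesis using \<open>c \<in> _\<close> by simp
    next
      case (PEdge a ss) then show ?thesis using \<open>c \<in> _\<close>
        by (intro UnI2 rev_image_eqI[of "(a, ss)"]) simp_all
    qed (use \<open>c \<in> _\<close> in simp_all)
  qed
  moreover have "finite (PZero ` Pow \<tau> \<union> (\<lambda>(a, ss). PEdge a ss) ` ((UNIV :: 'a set) \<times> {ss. set ss \<subseteq> \<tau> \<and> distinct ss}))"
    using assms finite_subset_distinct[OF assms] by (intro finite_UnI finite_imageI finite_cartesian_product) simp_all
  ultimately show ?thesis by (rule finite_subset)
qed

lemma fin_perm:
  assumes "finite \<tau>" shows "finite {\<alpha>. finite_perm \<alpha> \<and> (\<forall>x. x \<notin> \<tau> \<longrightarrow> \<alpha> x = x)}" (is "finite ?A")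
proof -
  have inj: "inj_on (\<lambda>\<alpha>. restrict \<alpha> \<tau>) ?A"
  proof (rule inj_onI)
    fix \<alpha> \<beta> assume a: "\<alpha> \<in> ?A" "\<beta> \<in> ?A" "restrict \<alpha> \<tau> = restrict \<beta> \<tau>"
    show "\<alpha> = \<beta>"
    proof
      fix x show "\<alpha> x = \<beta> x"
      proof (cases "x \<in> \<tau>")
        case True then show ?thesis using fun_cong[OF a(3), of x] by simp
      next
        case False then show ?thesis using a(1,2) by auto
      qed
    qed
  qed
  have "(\<lambda>\<alpha>. restrict \<alpha> \<tau>) ` ?A \<subseteq> PiE \<tau> (\<lambda>_. \<tau>)"
  proof
    fix f assume "f \<in> (\<lambda>\<alpha>. restrict \<alpha> \<tau>) ` ?A"
    then obtain \<alpha> where al: "\<alpha> \<in> ?A" "f = restrict \<alpha> \<tau>" by auto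
    have "\<alpha> x \<in> \<tau>" if "x \<in> \<tau>" for x
    proof (rule ccontr)
      assume "\<alpha> x \<notin> \<tau>"
      then have "\<alpha> (\<alpha> x) = \<alpha> x" using al(1) by auto
      moreover have "inj \<alpha>" using al(1) by (auto simp: finite_perm_def bij_def)
      ultimately have "\<alpha> x = x" by (meson injD)
      then show False using \<open>\<alpha> x \<notin> \<tau>\<close> that by simp
    qed
    then show "f \<in> PiE \<tau> (\<lambda>_. \<tau>)" using al(2) by auto
  qed
  then have "finite ((\<lambda>\<alpha>. restrict \<alpha> \<tau>) ` ?A)"
    using finite_PiE[of \<tau> "\<lambda>_. \<tau>"] assms finite_subset by blast
  then show ?thesis using finite_imageD inj by blast
qed

lemma fin_Lb:
  assumes "finite \<tau>" shows "finite {b :: 'a plabel. parse_binary \<tau> b}"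
proof -
  have "{b :: 'a plabel. parse_binary \<tau> b} \<subseteq>
     PRestrict ` Pow \<tau> \<union> PRename ` {\<alpha>. finite_perm \<alpha> \<and> (\<forall>x. x \<notin> \<tau> \<longrightarrow> \<alpha> x = x)}"
  proof
    fix c :: "'a plabel" assume "c \<in> {c. parse_binary \<tau> c}"
    then show "c \<in> PRestrict ` Pow \<tau> \<union> PRename ` {\<alpha>. finite_perm \<alpha> \<and> (\<forall>x. x \<notin> \<tau> \<longrightarrow> \<alpha> x = x)}"
    proof (cases c)
      case (PRestrict x) then show ?thesis using \<open>c \<in> _\<close> by simp
    next
      case (PRename x) then show ?thesis using \<open>c \<in> _\<close> by simp
    qed (use \<open>c \<in> _\<close> in simp_all)
  qed
  moreover have "finite (PRestrict ` Pow \<tau> \<union> PRename ` {\<alpha>. finite_perm \<alpha> \<and> (\<forall>x. x \<notin> \<tau> \<longrightarrow> \<alpha> x = x)})"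
    using assms fin_perm[OF assms] by (intro finite_UnI finite_imageI) simp_all
  ultimately show ?thesis by (rule finite_subset)
qed

definition mTrue :: "'r mso" where "mTrue = FNeg (FEx 0 (FNeg (FEq 0 0)))"
definition mImp :: "'r mso \<Rightarrow> 'r mso \<Rightarrow> 'r mso" where "mImp a b = FNeg (FConj a (FNeg b))"
definition mAll :: "nat \<Rightarrow> 'r mso \<Rightarrow> 'r mso" where "mAll x a = FNeg (FEx x (FNeg a))"
definition mSAll :: "nat \<Rightarrow> 'r mso \<Rightarrow> 'r mso" where "mSAll x a = FNeg (SEx x (FNeg a))"

fun mConjs :: "'r mso list \<Rightarrow> 'r mso" where
  "mConjs [] = mTrue"
| "mConjs (x # xs) = FConj x (mConjs xs)"

definition uclause :: "'b \<times> nat \<Rightarrow> 'b rsym mso" where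
  "uclause cq = mAll 0 (mAll 1 (mImp (Atom (RLab (fst cq)) [0, 1]) (FMem 1 (snd cq))))"

definition bclause :: "'b \<times> nat \<times> nat \<Rightarrow> 'b rsym mso" where
  "bclause bqq = mAll 0 (mAll 1 (mAll 2 (mImp (Atom (RLab (fst bqq)) [0, 1, 2])
      (mImp (FMem 2 (snd (snd bqq))) (FMem 1 (fst (snd bqq)))))))"

definition rclause :: "nat \<Rightarrow> 'b rsym mso" where
  "rclause s = mAll 0 (mImp (Atom RRoot [0]) (FMem 0 s))"

definition phi :: "nat list \<Rightarrow> ('b \<times> nat) list \<Rightarrow> ('b \<times> nat \<times> nat) list \<Rightarrow> nat \<Rightarrow> 'b rsym mso" where
  "phi qs ul bl s = foldr mSAll qs (mImp (FConj (mConjs (map uclause ul)) (mConjs (map bclause bl))) (rclause s))"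

lemma sat_basic[simp]:
  "msat U I f X mTrue"
  "msat U I f X (mImp a b) = (msat U I f X a \<longrightarrow> msat U I f X b)"
  "msat U I f X (mAll x a) = (\<forall>u\<in>U. msat U I (f(x := u)) X a)"
  "msat U I f X (mSAll Y a) = (\<forall>A. A \<subseteq> U \<longrightarrow> msat U I f (X(Y := A)) a)"
  by (auto simp: mTrue_def mImp_def mAll_def mSAll_def)

lemma fv_basic[simp]:
  "ffv mTrue = {}" "sfv mTrue = {}" "mso_over S mTrue"
  "ffv (mImp a b) = ffv a \<union> ffv b" "sfv (mImp a b) = sfv a \<union> sfv b"
  "mso_over S (mImp a b) = (mso_over S a \<and> mso_over S b)"
  "ffv (mAll x a) = ffv a - {x}" "sfv (mAll x a) = sfv a" "mso_over S (mAll x a) = mso_over S a"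
  "ffv (mSAll x a) = ffv a" "sfv (mSAll x a) = sfv a - {x}" "mso_over S (mSAll x a) = mso_over S a"
  by (auto simp: mTrue_def mImp_def mAll_def mSAll_def)

lemma sat_conjs: "msat U I f X (mConjs xs) = (\<forall>x\<in>set xs. msat U I f X x)"
  by (induction xs) auto

lemma fv_conjs: "ffv (mConjs xs) = (\<Union>x\<in>set xs. ffv x)" "sfv (mConjs xs) = (\<Union>x\<in>set xs. sfv x)"
  "mso_over S (mConjs xs) = (\<forall>x\<in>set xs. mso_over S x)"
  by (induction xs) auto

lemma sat_foldr:
  "msat U I f X (foldr mSAll qs a) =
   (\<forall>Y. (\<forall>q\<in>set qs. Y q \<subseteq> U) \<longrightarrow> msat U I f (\<lambda>q. if q \<in> set qs then Y q else X q) a)"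
proof (induction qs arbitrary: X)
  case Nil then show ?case by simp
next
  case (Cons x qs)
  show ?case
  proof
    assume L: "msat U I f X (foldr mSAll (x # qs) a)"
    show "\<forall>Y. (\<forall>q\<in>set (x # qs). Y q \<subseteq> U) \<longrightarrow> msat U I f (\<lambda>q. if q \<in> set (x # qs) then Y q else X q) a"
    proof (intro allI impI)
      fix Y assume Y: "\<forall>q\<in>set (x # qs). Y q \<subseteq> U"
      have "msat U I f (X(x := Y x)) (foldr mSAll qs a)" using L Y by simp
      then have "msat U I f (\<lambda>q. if q \<in> set qs then Y q else (X(x := Y x)) q) a"
        using Cons.IH Y by simp
      moreover have "(\<lambda>q. if q \<in> set qs then Y q else (X(x := Y x)) q) = (\<lambda>q. if q \<in> set (x # qs) then Y q else X q)"
        by (rule ext) auto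
      ultimately show "msat U I f (\<lambda>q. if q \<in> set (x # qs) then Y q else X q) a" by simp
    qed
  next
    assume R: "\<forall>Y. (\<forall>q\<in>set (x # qs). Y q \<subseteq> U) \<longrightarrow> msat U I f (\<lambda>q. if q \<in> set (x # qs) then Y q else X q) a"
    show "msat U I f X (foldr mSAll (x # qs) a)"
    proof (simp, intro allI impI)
      fix A assume A: "A \<subseteq> U"
      show "msat U I f (X(x := A)) (foldr mSAll qs a)"
      proof (subst Cons.IH, intro allI impI)
        fix Y assume Y: "\<forall>q\<in>set qs. Y q \<subseteq> U"
        define Z where "Z = (\<lambda>q. if q \<in> set qs then Y q else A)"
        have "\<forall>q\<in>set (x # qs). Z q \<subseteq> U" using Y A by (auto simp: Z_def)
        then have "msat U I f (\<lambda>q. if q \<in> set (x # qs) then Z q else X q) a" using R by blast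
        moreover have "(\<lambda>q. if q \<in> set (x # qs) then Z q else X q) = (\<lambda>q. if q \<in> set qs then Y q else (X(x := A)) q)"
          by (rule ext) (auto simp: Z_def)
        ultimately show "msat U I f (\<lambda>q. if q \<in> set qs then Y q else (X(x := A)) q) a" by simp
      qed
    qed
  qed
qed

lemma sfv_foldr: "sfv (foldr mSAll qs a) = sfv a - set qs"
  by (induction qs) auto
lemma ffv_foldr: "ffv (foldr mSAll qs a) = ffv a"
  by (induction qs) auto
lemma over_foldr: "mso_over S (foldr mSAll qs a) = mso_over S a"
  by (induction qs) auto

lemma sat_u: "msat U I f X (uclause (c, q)) = (\<forall>e\<in>U. \<forall>n\<in>U. (RLab c, [e, n]) \<in> I \<longrightarrow> n \<in> X q)"
  by (simp add: uclause_def)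
lemma sat_b: "msat U I f X (bclause (b, q, q')) =
   (\<forall>e\<in>U. \<forall>n\<in>U. \<forall>m\<in>U. (RLab b, [e, n, m]) \<in> I \<longrightarrow> m \<in> X q' \<longrightarrow> n \<in> X q)"
  by (simp add: bclause_def)
lemma sat_r: "msat U I f X (rclause s) = (\<forall>u\<in>U. (RRoot, [u]) \<in> I \<longrightarrow> u \<in> X s)"
  by (simp add: rclause_def)


lemma bin_not_un: "parse_binary \<tau> b \<Longrightarrow> \<not> parse_unary ar \<tau> b"
  by (cases b) auto

lemma enc_RLab: "(RLab c, xs) \<in> enc_rel t \<longleftrightarrow> (RLab c, xs) \<in> tfacts t [] Root"
  by (simp add: enc_rel_def)

lemma enc_RRoot: "(RRoot, [u]) \<in> enc_rel t \<longleftrightarrow> u = Root"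
  using facts_RLab[of "[u]" t "[]" Root] by (auto simp: enc_rel_def)

theorem lemma5p6:
  fixes ar :: "'a::finite \<Rightarrow> nat" and \<tau> :: "nat set" and s :: nat
  assumes "finite \<tau>"
  shows "\<exists>\<phi> :: 'a plabel rsym mso.
           mso_sentence \<phi> \<and> mso_over (rtree_parse_ar ar \<tau>) \<phi> \<and>
           (\<forall>t. parse_tterm ar \<tau> t \<longrightarrow>
                (mmodels (enc_univ t) (enc_rel t) \<phi> \<longleftrightarrow> has_source (val t) s))"
proof (cases "s \<in> \<tau>")
  case False
  show ?thesis
  proof (intro exI[of _ "FNeg mTrue"] conjI allI impI)
    show "mso_sentence (FNeg mTrue :: 'a plabel rsym mso)" by (simp add: mso_sentence_def)
    show "mso_over (rtree_parse_ar ar \<tau>) (FNeg mTrue)" by simp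
    fix t :: "'a plabel tterm" assume "parse_tterm ar \<tau> t"
    then show "mmodels (enc_univ t) (enc_rel t) (FNeg mTrue) = has_source (val t) s"
      using hs_tau[of ar \<tau> t s] False unfolding mmodels_def parse_tterm_def by auto
  qed
next
  case sin: True
  define UP where "UP = {(c :: 'a plabel, q). parse_unary ar \<tau> c \<and> q \<in> \<tau> \<and> has_source (hr_const c) q}"
  define BP where "BP = {(b :: 'a plabel, q, q'). parse_binary \<tau> b \<and> q \<in> \<tau> \<and> q' \<in> \<tau> \<and>
        (\<forall>G. has_source G q' \<longrightarrow> has_source (hr_unop b G) q)}"
  have "UP \<subseteq> {c. parse_unary ar \<tau> c} \<times> \<tau>" by (auto simp: UP_def)
  then have "finite UP" using fin_Lu[OF assms, of ar] assms finite_subset by blast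
  then obtain ul where ul: "set ul = UP" using finite_list by blast
  have "BP \<subseteq> {b. parse_binary \<tau> b} \<times> \<tau> \<times> \<tau>" by (auto simp: BP_def)
  then have "finite BP" using fin_Lb[OF assms] assms finite_subset by blast
  then obtain bl where bl: "set bl = BP" using finite_list by blast
  obtain qs where qs: "set qs = \<tau>" using finite_list assms by blast
  define \<phi> :: "'a plabel rsym mso" where "\<phi> = phi qs ul bl s"
  define inner :: "'a plabel rsym mso" where
    "inner = mImp (FConj (mConjs (map uclause ul)) (mConjs (map bclause bl))) (rclause s)"
  have phi_eq: "\<phi> = foldr mSAll qs inner" by (simp add: \<phi>_def phi_def inner_def)
  have ffv_u: "ffv (uclause cq) = {}" "sfv (uclause cq) = {snd cq}" for cq :: "'a plabel \<times> nat"
    by (auto simp: uclause_def)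
  have ffv_b: "ffv (bclause bq) = {}" "sfv (bclause bq) = {fst (snd bq), snd (snd bq)}" for bq :: "'a plabel \<times> nat \<times> nat"
    by (auto simp: bclause_def)
  have ffv_r: "ffv (rclause s :: 'a plabel rsym mso) = {}" "sfv (rclause s :: 'a plabel rsym mso) = {s}"
    by (auto simp: rclause_def)
  have "ffv inner = {}" by (simp add: inner_def fv_conjs ffv_u ffv_b ffv_r)
  moreover have "sfv inner \<subseteq> \<tau>"
    using ul bl sin by (auto simp: inner_def fv_conjs ffv_u ffv_b ffv_r UP_def BP_def)
  ultimately have sent: "mso_sentence \<phi>"
    by (auto simp: mso_sentence_def phi_eq sfv_foldr ffv_foldr qs)
  have over: "mso_over (rtree_parse_ar ar \<tau>) \<phi>"
    using ul bl
    by (auto dest: bin_not_un simp: phi_eq over_foldr inner_def fv_conjs uclause_def bclause_def rclause_def UP_def BP_def)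
  have main: "mmodels (enc_univ t) (enc_rel t) \<phi> \<longleftrightarrow> has_source (val t) s"
    if wf: "parse_tterm ar \<tau> t" for t
  proof -
    let ?U = "enc_univ t" and ?I = "enc_rel t"
    have wt: "wf_tterm (parse_unary ar \<tau>) (parse_binary \<tau>) t" using wf by (simp add: parse_tterm_def)
    have RootU: "Root \<in> ?U" by (simp add: enc_univ_def r_univ)
    have factU: "set xs \<subseteq> ?U" if "(RLab c, xs) \<in> ?I" for c xs
      using that facts_univ[of "RLab c" xs t "[]" Root] by (simp add: enc_RLab enc_univ_def)
    have sem: "msat ?U ?I f X inner \<longleftrightarrow>
        ((\<forall>(c, q)\<in>UP. \<forall>e\<in>?U. \<forall>n\<in>?U. (RLab c, [e, n]) \<in> ?I \<longrightarrow> n \<in> X q) \<and>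
         (\<forall>(b, q, q')\<in>BP. \<forall>e\<in>?U. \<forall>n\<in>?U. \<forall>m\<in>?U. (RLab b, [e, n, m]) \<in> ?I \<longrightarrow> m \<in> X q' \<longrightarrow> n \<in> X q)
         \<longrightarrow> Root \<in> X s)" for f X
      using RootU by (auto simp: inner_def sat_conjs sat_u sat_b sat_r enc_RRoot simp flip: ul bl)
    have models: "mmodels ?U ?I \<phi> \<longleftrightarrow> (\<forall>Y. (\<forall>q\<in>\<tau>. Y q \<subseteq> ?U) \<longrightarrow>
        ((\<forall>(c, q)\<in>UP. \<forall>e\<in>?U. \<forall>n\<in>?U. (RLab c, [e, n]) \<in> ?I \<longrightarrow> n \<in> Y q) \<and>
         (\<forall>(b, q, q')\<in>BP. \<forall>e\<in>?U. \<forall>n\<in>?U. \<forall>m\<in>?U. (RLab b, [e, n, m]) \<in> ?I \<longrightarrow> m \<in> Y q' \<longrightarrow> n \<in> Y q)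
         \<longrightarrow> Root \<in> Y s))" (is "_ \<longleftrightarrow> (\<forall>Y. ?P Y)")
    proof -
      have "mmodels ?U ?I \<phi> \<longleftrightarrow> (\<forall>Y. (\<forall>q\<in>\<tau>. Y q \<subseteq> ?U) \<longrightarrow>
             msat ?U ?I (\<lambda>_. undefined) (\<lambda>q. if q \<in> \<tau> then Y q else {}) inner)"
        by (simp add: mmodels_def phi_eq sat_foldr qs)
      also have "\<dots> \<longleftrightarrow> (\<forall>Y. ?P Y)"
      proof -
        have "msat ?U ?I (\<lambda>_. undefined) (\<lambda>q. if q \<in> \<tau> then Y q else {}) inner \<longleftrightarrow>
              msat ?U ?I (\<lambda>_. undefined) Y inner" for Y
          unfolding sem using sin by (auto simp: UP_def BP_def)
        then show ?thesis by (simp add: sem)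
      qed
      finally show ?thesis .
    qed
    show ?thesis
    proof
      assume M: "mmodels ?U ?I \<phi>"
      define Y where "Y = (\<lambda>q. {n \<in> ?U. HSt t [] Root n q})"
      have lb: "(\<forall>c q e n. (RLab c, [e, n]) \<in> tfacts t [] Root \<longrightarrow> has_source (hr_const c) q \<longrightarrow> (n \<in> ?U \<and> HSt t [] Root n q)) \<and>
         (\<forall>b q q' e n m. (RLab b, [e, n, m]) \<in> tfacts t [] Root \<longrightarrow>
             (\<forall>G. has_source G q' \<longrightarrow> has_source (hr_unop b G) q) \<longrightarrow> (m \<in> ?U \<and> HSt t [] Root m q') \<longrightarrow> (n \<in> ?U \<and> HSt t [] Root n q))"
        by (rule lemB) (auto simp: Root_notin enc_univ_def HSt_univ)
      have "?P Y"
        using M models by blast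
      moreover have "\<forall>q\<in>\<tau>. Y q \<subseteq> ?U" by (auto simp: Y_def)
      moreover have "\<forall>(c, q)\<in>UP. \<forall>e\<in>?U. \<forall>n\<in>?U. (RLab c, [e, n]) \<in> ?I \<longrightarrow> n \<in> Y q"
        using lb by (auto simp: UP_def Y_def enc_RLab)
      moreover have "\<forall>(b, q, q')\<in>BP. \<forall>e\<in>?U. \<forall>n\<in>?U. \<forall>m\<in>?U. (RLab b, [e, n, m]) \<in> ?I \<longrightarrow> m \<in> Y q' \<longrightarrow> n \<in> Y q"
        using lb by (auto simp: BP_def Y_def enc_RLab)
      ultimately have "Root \<in> Y s" using M models by blast
      then show "has_source (val t) s" using HSt_root[OF Root_notin, of t "[]" s] by (simp add: Y_def)
    next
      assume H: "has_source (val t) s"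
      show "mmodels ?U ?I \<phi>"
        unfolding models
      proof (intro allI impI)
        fix Y assume Ysub: "\<forall>q\<in>\<tau>. Y q \<subseteq> ?U" and
          C: "(\<forall>(c, q)\<in>UP. \<forall>e\<in>?U. \<forall>n\<in>?U. (RLab c, [e, n]) \<in> ?I \<longrightarrow> n \<in> Y q) \<and>
         (\<forall>(b, q, q')\<in>BP. \<forall>e\<in>?U. \<forall>n\<in>?U. \<forall>m\<in>?U. (RLab b, [e, n, m]) \<in> ?I \<longrightarrow> m \<in> Y q' \<longrightarrow> n \<in> Y q)"
        show "Root \<in> Y s"
        proof (rule lemA[OF wt order_refl _ _ H])
          fix c q e n assume a: "(RLab c, [e, n]) \<in> tfacts t [] Root" "parse_unary ar \<tau> c" "q \<in> \<tau>"
            "has_source (hr_const c) q"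
          have "e \<in> ?U" "n \<in> ?U" using factU[of c "[e, n]"] a(1) by (auto simp: enc_RLab)
          then show "n \<in> Y q" using C a by (auto simp: UP_def enc_RLab)
        next
          fix b q q' e n m assume a: "(RLab b, [e, n, m]) \<in> tfacts t [] Root" "parse_binary \<tau> b" "q \<in> \<tau>"
            "q' \<in> \<tau>" "\<forall>G. has_source G q' \<longrightarrow> has_source (hr_unop b G) q" "m \<in> Y q'"
          have "e \<in> ?U" "n \<in> ?U" "m \<in> ?U" using factU[of b "[e, n, m]"] a(1) by (auto simp: enc_RLab)
          moreover have "(b, q, q') \<in> BP" using a by (simp add: BP_def)
          ultimately show "n \<in> Y q" using C a(1,6) by (auto simp: enc_RLab)
        qed
      qed
    qed
  qed
  show ?thesis using sent over main by blast
qed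

end
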